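(* Let $G$ be a group with finite generating set $S$, let $\Gamma$ be a tileset graph for $(G,S)$ and let $Y$ be a non-empty skeletal subset. Then $X=Y\cap X_\Gamma$ is non-empty if and only if there is a bi-infinite $\Gamma$-snake $(\omega,\zeta)$ with $d\omega\in Y$. In addition, if $Y$ is an effective (resp. sofic) subshift, then $X$ is an effective (resp. sofic) subshift.
   Context: Elements of $G$ are represented by words over the alphabet $S\cup S^{-1}$; $\overline{w}$ denotes the element represented by $w$. A tileset graph for $(G,S)$ is a finite multigraph $\Gamma=(A,B)$ whose edges are triples $(a,a',s)$ with $a,a'\in A$, $s\in S\cup S^{-1}$ (from $a$ to $a'$, labeled $s$), such that $(a,a',s)\in B$ implies $(a',a,s^{-1})\in B$. A bi-infinite $\Gamma$-snake is a pair $(\omega,\zeta)$ with $\omega:\mathbb{Z}\to G$ injective and $\zeta:\mathbb{Z}\to A$ such that for all $i$, $d\omega_i:=\omega(i)^{-1}\omega(i+1)\in S\cup S^{-1}$ and $(\zeta(i),\zeta(i+1),d\omega_i)\in B$; $d\omega$ denotes the sequence $(d\omega_i)_{i\in\mathbb{Z}}\in (S\cup S^{-1})^{\mathbb{Z}}$. For a finite alphabet $\mathcal{A}$, a subshift is a set $X_{\mathcal F}\subseteq\mathcal{A}^{\mathbb{Z}}$ of all sequences in which no word of a set $\mathcal{F}$ of forbidden finite words appears; it is sofic if $\mathcal F$ can be taken regular and effective if $\mathcal F$ can be taken decidable. The skeleton subshift $X_{G,S}\subseteq (S\cup S^{-1})^{\mathbb{Z}}$ is the set of sequences none of whose non-empty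 finite factors represents $1_G$. A skeletal subset is a shift-invariant subset $Y\subseteq X_{G,S}$ (shift $\sigma(x)_i=x_{i+1}$). $X_\Gamma\subseteq(S\cup S^{-1})^{\mathbb{Z}}$ is the set of label sequences of bi-infinite paths in $\Gamma$. *)

theory Defs
  imports "HOL-Algebra.Generated_Groups" "HOL-Library.Nat_Bijection"
begin

definition alph :: "('g, 'b) monoid_scheme \<Rightarrow> 'g set \<Rightarrow> 'g set" where
  "alph G S = S \<union> (\<lambda>s. inv\<^bsub>G\<^esub> s) ` S"

definition word_val :: "('g, 'b) monoid_scheme \<Rightarrow> 'g list \<Rightarrow> 'g" where
  "word_val G w = foldr (\<lambda>a b. a \<otimes>\<^bsub>G\<^esub> b) w \<one>\<^bsub>G\<^esub>"

definition factor :: "(int \<Rightarrow> 'c) \<Rightarrow> int \<Rightarrow> nat \<Rightarrow> 'c list" where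
  "factor x i n = map (\<lambda>k. x (i + int k)) [0..<n]"

definition shift :: "(int \<Rightarrow> 'c) \<Rightarrow> (int \<Rightarrow> 'c)" where
  "shift x = (\<lambda>i. x (i + 1))"

definition skeleton :: "('g, 'b) monoid_scheme \<Rightarrow> 'g set \<Rightarrow> (int \<Rightarrow> 'g) set" where
  "skeleton G S = {x. (\<forall>i. x i \<in> alph G S) \<and>
      (\<forall>i n. n > 0 \<longrightarrow> word_val G (factor x i n) \<noteq> \<one>\<^bsub>G\<^esub>)}"

definition skeletal :: "('g, 'b) monoid_scheme \<Rightarrow> 'g set \<Rightarrow> (int \<Rightarrow> 'g) set \<Rightarrow> bool" where
  "skeletal G S Y \<longleftrightarrow> Y \<subseteq> skeleton G S \<and> shift ` Y = Y"

definition tileset_graph ::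
  "('g, 'b) monoid_scheme \<Rightarrow> 'g set \<Rightarrow> 'a set \<Rightarrow> ('a \<times> 'a \<times> 'g) set \<Rightarrow> bool" where
  "tileset_graph G S A B \<longleftrightarrow> finite A \<and> B \<subseteq> A \<times> A \<times> alph G S \<and>
     (\<forall>a a' s. (a, a', s) \<in> B \<longrightarrow> (a', a, inv\<^bsub>G\<^esub> s) \<in> B)"

definition dw :: "('g, 'b) monoid_scheme \<Rightarrow> (int \<Rightarrow> 'g) \<Rightarrow> (int \<Rightarrow> 'g)" where
  "dw G \<omega> = (\<lambda>i. inv\<^bsub>G\<^esub> (\<omega> i) \<otimes>\<^bsub>G\<^esub> \<omega> (i + 1))"

definition snake ::
  "('g, 'b) monoid_scheme \<Rightarrow> 'g set \<Rightarrow> ('a \<times> 'a \<times> 'g) set \<Rightarrow> (int \<Rightarrow> 'g) \<Rightarrow> (int \<Rightarrow> 'a) \<Rightarrow> bool" where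
  "snake G S B \<omega> \<zeta> \<longleftrightarrow> inj \<omega> \<and> (\<forall>i. \<omega> i \<in> carrier G) \<and>
     (\<forall>i. dw G \<omega> i \<in> alph G S \<and> (\<zeta> i, \<zeta> (i + 1), dw G \<omega> i) \<in> B)"

definition X_graph :: "('a \<times> 'a \<times> 'g) set \<Rightarrow> (int \<Rightarrow> 'g) set" where
  "X_graph B = {x. \<exists>\<zeta>. \<forall>i. (\<zeta> i, \<zeta> (i + 1), x i) \<in> B}"

definition occurs :: "'c list \<Rightarrow> (int \<Rightarrow> 'c) \<Rightarrow> bool" where
  "occurs w x \<longleftrightarrow> (\<exists>i. factor x i (length w) = w)"

definition X_forb :: "'c set \<Rightarrow> 'c list set \<Rightarrow> (int \<Rightarrow> 'c) set" where
  "X_forb Al F = {x. (\<forall>i. x i \<in> Al) \<and> (\<forall>w\<in>F. \<not> occurs w x)}"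

definition regular_lang :: "'c set \<Rightarrow> 'c list set \<Rightarrow> bool" where
  "regular_lang Al L \<longleftrightarrow> L \<subseteq> lists Al \<and>
    (\<exists>(Q :: nat set) q0 \<delta> Fin. finite Q \<and> q0 \<in> Q \<and> Fin \<subseteq> Q \<and>
       (\<forall>q\<in>Q. \<forall>a\<in>Al. \<delta> q a \<in> Q) \<and>
       L = {w \<in> lists Al. foldl \<delta> q0 w \<in> Fin})"

datatype recf = Zero | Succ | Proj nat | Comp recf "recf list" | Prim recf recf | Mu recf

inductive eval_recf :: "recf \<Rightarrow> nat list \<Rightarrow> nat \<Rightarrow> bool" where
  zero: "eval_recf Zero xs 0"
| succ: "eval_recf Succ (x # xs) (Suc x)"
| proj: "i < length xs \<Longrightarrow> eval_recf (Proj i) xs (xs ! i)"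
| comp: "list_all2 (\<lambda>g y. eval_recf g xs y) gs ys \<Longrightarrow> eval_recf f ys z \<Longrightarrow>
           eval_recf (Comp f gs) xs z"
| prim0: "eval_recf f xs z \<Longrightarrow> eval_recf (Prim f g) (0 # xs) z"
| primS: "eval_recf (Prim f g) (n # xs) y \<Longrightarrow> eval_recf g (n # y # xs) z \<Longrightarrow>
           eval_recf (Prim f g) (Suc n # xs) z"
| mu: "eval_recf f (n # xs) 0 \<Longrightarrow> (\<forall>m<n. \<exists>y>0. eval_recf f (m # xs) y) \<Longrightarrow>
           eval_recf (Mu f) xs n"

definition decidable_nat_set :: "nat set \<Rightarrow> bool" where
  "decidable_nat_set D \<longleftrightarrow> (\<exists>f. \<forall>n. eval_recf f [n] (if n \<in> D then 1 else 0))"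

definition decidable_lang :: "'c set \<Rightarrow> 'c list set \<Rightarrow> bool" where
  "decidable_lang Al L \<longleftrightarrow> L \<subseteq> lists Al \<and>
    (\<exists>e. bij_betw e Al {..<card Al} \<and> decidable_nat_set (list_encode ` map e ` L))"

definition sofic_subshift :: "'c set \<Rightarrow> (int \<Rightarrow> 'c) set \<Rightarrow> bool" where
  "sofic_subshift Al X \<longleftrightarrow> (\<exists>F. regular_lang Al F \<and> X = X_forb Al F)"

definition effective_subshift :: "'c set \<Rightarrow> (int \<Rightarrow> 'c) set \<Rightarrow> bool" where
  "effective_subshift Al X \<longleftrightarrow> (\<exists>F. decidable_lang Al F \<and> X = X_forb Al F)"

end

theory Submission
  imports Defs
begin

definition comp_by :: "nat \<Rightarrow> recf \<Rightarrow> (nat list \<Rightarrow> nat) \<Rightarrow> bool" where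
  "comp_by k f g \<longleftrightarrow> (\<forall>xs. length xs = k \<longrightarrow> eval_recf f xs (g xs))"

definition rf :: "nat \<Rightarrow> (nat list \<Rightarrow> nat) \<Rightarrow> bool" where
  "rf k g \<longleftrightarrow> (\<exists>f. comp_by k f g)"

lemma rf_cong: "rf k g \<Longrightarrow> (\<And>xs. length xs = k \<Longrightarrow> g xs = h xs) \<Longrightarrow> rf k h"
  unfolding rf_def comp_by_def by metis

fun cnst :: "nat \<Rightarrow> recf" where
  "cnst 0 = Zero"
| "cnst (Suc c) = Comp Succ [cnst c]"

lemma eval_cnst: "eval_recf (cnst c) xs c"
proof (induction c)
  case 0 then show ?case by (simp add: eval_recf.zero)
next
  case (Suc c)
  then show ?case by (auto intro!: eval_recf.comp[where ys="[c]"] eval_recf.succ)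
qed

lemma rf_const: "rf k (\<lambda>_. c)"
  unfolding rf_def comp_by_def using eval_cnst by blast

lemma rf_proj: "i < k \<Longrightarrow> rf k (\<lambda>xs. xs ! i)"
  unfolding rf_def comp_by_def using eval_recf.proj by metis

lemma rf_succ1: "rf 1 (\<lambda>xs. Suc (xs ! 0))"
  unfolding rf_def comp_by_def
proof (intro exI[of _ Succ] allI impI)
  fix xs :: "nat list" assume "length xs = 1"
  then obtain x where "xs = [x]" by (cases xs) auto
  then show "eval_recf Succ xs (Suc (xs ! 0))" by (simp add: eval_recf.succ)
qed

lemma choose_list: "(\<forall>g\<in>set gs. \<exists>f. P f g) \<Longrightarrow> \<exists>fs. list_all2 P fs gs"
proof (induction gs)
  case Nil then show ?case by auto
next
  case (Cons g gs)
  then obtain fs f where "list_all2 P fs gs" "P f g" by auto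
  then show ?case by (intro exI[of _ "f # fs"]) auto
qed

lemma rf_comp:
  assumes "rf m h" "length gs = m" "\<forall>g\<in>set gs. rf k g"
  shows "rf k (\<lambda>xs. h (map (\<lambda>g. g xs) gs))"
proof -
  obtain fh where fh: "comp_by m fh h" using assms(1) rf_def by blast
  obtain fs where fs: "list_all2 (\<lambda>f g. comp_by k f g) fs gs"
    using choose_list[of gs "\<lambda>f g. comp_by k f g"] assms(3) unfolding rf_def by blast
  have "comp_by k (Comp fh fs) (\<lambda>xs. h (map (\<lambda>g. g xs) gs))"
    unfolding comp_by_def
  proof (intro allI impI)
    fix xs :: "nat list" assume len: "length xs = k"
    have "list_all2 (\<lambda>g y. eval_recf g xs y) fs (map (\<lambda>g. g xs) gs)"
      using fs len unfolding list_all2_map2 comp_by_def by (auto elim: list_all2_mono)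
    moreover have "eval_recf fh (map (\<lambda>g. g xs) gs) (h (map (\<lambda>g. g xs) gs))"
      using fh assms(2) unfolding comp_by_def by auto
    ultimately show "eval_recf (Comp fh fs) xs (h (map (\<lambda>g. g xs) gs))"
      by (rule eval_recf.comp)
  qed
  then show ?thesis unfolding rf_def by blast
qed

lemma rf_comp1: "rf 1 h \<Longrightarrow> rf k g \<Longrightarrow> rf k (\<lambda>xs. h [g xs])"
  using rf_comp[of 1 h "[g]" k] by simp

lemma rf_comp2: "rf 2 h \<Longrightarrow> rf k g1 \<Longrightarrow> rf k g2 \<Longrightarrow> rf k (\<lambda>xs. h [g1 xs, g2 xs])"
  using rf_comp[of 2 h "[g1, g2]" k] by simp

lemma rf_comp3: "rf 3 h \<Longrightarrow> rf k g1 \<Longrightarrow> rf k g2 \<Longrightarrow> rf k g3 \<Longrightarrow>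
   rf k (\<lambda>xs. h [g1 xs, g2 xs, g3 xs])"
  using rf_comp[of 3 h "[g1, g2, g3]" k] by (simp add: numeral_3_eq_3)

primrec pr :: "(nat list \<Rightarrow> nat) \<Rightarrow> (nat list \<Rightarrow> nat) \<Rightarrow> nat \<Rightarrow> nat list \<Rightarrow> nat" where
  "pr F0 G 0 xs = F0 xs"
| "pr F0 G (Suc n) xs = G (n # pr F0 G n xs # xs)"

lemma rf_prim:
  assumes "rf k F0" "rf (Suc (Suc k)) G"
  shows "rf (Suc k) (\<lambda>xs. pr F0 G (hd xs) (tl xs))"
proof -
  obtain f g where f: "comp_by k f F0" and g: "comp_by (Suc (Suc k)) g G"
    using assms rf_def by blast
  have ev: "eval_recf (Prim f g) (n # ys) (pr F0 G n ys)" if "length ys = k" for n ys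
  proof (induction n)
    case 0 then show ?case using f that by (simp add: comp_by_def eval_recf.prim0)
  next
    case (Suc n)
    have "eval_recf g (n # pr F0 G n ys # ys) (G (n # pr F0 G n ys # ys))"
      using g that by (simp add: comp_by_def)
    then show ?case using Suc by (simp add: eval_recf.primS)
  qed
  have "comp_by (Suc k) (Prim f g) (\<lambda>xs. pr F0 G (hd xs) (tl xs))"
    unfolding comp_by_def
  proof (intro allI impI)
    fix xs :: "nat list" assume "length xs = Suc k"
    then obtain n ys where "xs = n # ys" "length ys = k" by (cases xs) auto
    then show "eval_recf (Prim f g) xs (pr F0 G (hd xs) (tl xs))" using ev by simp
  qed
  then show ?thesis unfolding rf_def by blast
qed

lemma len2: "length xs = 2 \<Longrightarrow> \<exists>a b. xs = [a, b]"
  by (cases xs; cases "tl xs") auto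
lemma len1: "length xs = Suc 0 \<Longrightarrow> \<exists>a. xs = [a]"
  by (cases xs) auto

lemma rf_suc: "rf k f \<Longrightarrow> rf k (\<lambda>xs. Suc (f xs))"
  using rf_comp1[OF rf_succ1] by simp

lemma rf_add2: "rf 2 (\<lambda>xs. xs ! 0 + xs ! 1)"
proof -
  let ?F0 = "\<lambda>ys::nat list. ys ! 0" and ?G = "\<lambda>ys::nat list. Suc (ys ! 1)"
  have "rf 2 (\<lambda>xs. pr ?F0 ?G (hd xs) (tl xs))"
    using rf_prim[of 1 ?F0 ?G] rf_proj rf_suc[OF rf_proj[of 1 3]] by (simp add: numeral_2_eq_2 numeral_3_eq_3)
  moreover have e: "pr ?F0 ?G n [m] = n + m" for n m by (induction n) auto
  ultimately show ?thesis by (elim rf_cong) (auto dest!: len2)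
qed

lemma rf_add: "rf k f \<Longrightarrow> rf k g \<Longrightarrow> rf k (\<lambda>xs. f xs + g xs)"
  using rf_comp2[OF rf_add2] by simp

lemma rf_mult2: "rf 2 (\<lambda>xs. xs ! 0 * xs ! 1)"
proof -
  let ?F0 = "\<lambda>ys::nat list. 0::nat" and ?G = "\<lambda>ys::nat list. ys ! 1 + ys ! 2"
  have "rf 3 ?G" by (rule rf_add; rule rf_proj; simp)
  then have "rf 2 (\<lambda>xs. pr ?F0 ?G (hd xs) (tl xs))"
    using rf_prim[of 1 ?F0 ?G] rf_const by (simp add: numeral_2_eq_2 numeral_3_eq_3)
  moreover have e: "pr ?F0 ?G n [m] = n * m" for n m by (induction n) auto
  ultimately show ?thesis by (elim rf_cong) (auto dest!: len2)
qed

lemma rf_mult: "rf k f \<Longrightarrow> rf k g \<Longrightarrow> rf k (\<lambda>xs. f xs * g xs)"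
  using rf_comp2[OF rf_mult2] by simp

lemma rf_pred1: "rf 1 (\<lambda>xs. xs ! 0 - 1)"
proof -
  let ?F0 = "\<lambda>ys::nat list. 0::nat" and ?G = "\<lambda>ys::nat list. ys ! 0"
  have "rf 1 (\<lambda>xs. pr ?F0 ?G (hd xs) (tl xs))"
    using rf_prim[of 0 ?F0 ?G] rf_const[of 0 0] rf_proj[of 0 "Suc (Suc 0)"] by simp
  moreover have e: "pr ?F0 ?G n [] = n - 1" for n by (cases n) auto
  ultimately show ?thesis by (elim rf_cong) (auto dest!: len1)
qed

lemma rf_sub2: "rf 2 (\<lambda>xs. xs ! 1 - xs ! 0)"
proof -
  let ?F0 = "\<lambda>ys::nat list. ys ! 0" and ?G = "\<lambda>ys::nat list. ys ! 1 - 1"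
  have "rf 3 ?G" using rf_comp1[OF rf_pred1 rf_proj[of 1 3]] by simp
  then have "rf 2 (\<lambda>xs. pr ?F0 ?G (hd xs) (tl xs))"
    using rf_prim[of 1 ?F0 ?G] rf_proj[of 0 1] by (simp add: numeral_2_eq_2 numeral_3_eq_3)
  moreover have e: "pr ?F0 ?G n [m] = m - n" for n m by (induction n) auto
  ultimately show ?thesis by (elim rf_cong) (auto dest!: len2)
qed

lemma rf_sub: "rf k f \<Longrightarrow> rf k g \<Longrightarrow> rf k (\<lambda>xs. f xs - g xs)"
  using rf_comp2[OF rf_sub2, of k g f] by simp

lemma rf_le: "rf k f \<Longrightarrow> rf k g \<Longrightarrow> rf k (\<lambda>xs. if f xs \<le> g xs then 1 else 0)"
proof -
  assume a: "rf k f" "rf k g"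
  have "rf k (\<lambda>xs. 1 - (f xs - g xs))" by (intro rf_sub rf_const a)
  then show ?thesis by (rule rf_cong) (simp split: if_split)
qed

lemma rf_eq: "rf k f \<Longrightarrow> rf k g \<Longrightarrow> rf k (\<lambda>xs. if f xs = g xs then 1 else 0)"
proof -
  assume a: "rf k f" "rf k g"
  have "rf k (\<lambda>xs. (if f xs \<le> g xs then 1 else 0) * (if g xs \<le> f xs then 1 else 0))"
    by (rule rf_mult[OF rf_le[OF a] rf_le[OF a(2) a(1)]])
  then show ?thesis by (rule rf_cong) (simp split: if_split)
qed

lemma rf_if: "rf k (\<lambda>xs. if P xs then 1 else 0) \<Longrightarrow> rf k a \<Longrightarrow> rf k b \<Longrightarrow>
   rf k (\<lambda>xs. if P xs then a xs else b xs)"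
proof -
  assume p: "rf k (\<lambda>xs. if P xs then 1 else 0)" and a: "rf k a" "rf k b"
  have "rf k (\<lambda>xs. (if P xs then 1 else 0) * a xs + (1 - (if P xs then 1 else 0)) * b xs)"
    by (rule rf_add[OF rf_mult[OF p a(1)] rf_mult[OF rf_sub[OF rf_const p] a(2)]])
  then show ?thesis by (rule rf_cong) (simp split: if_split)
qed

lemma rf_and: "rf k (\<lambda>xs. if P xs then 1 else 0) \<Longrightarrow> rf k (\<lambda>xs. if Q xs then 1 else 0) \<Longrightarrow>
   rf k (\<lambda>xs. if P xs \<and> Q xs then 1 else 0)"
proof -
  assume p: "rf k (\<lambda>xs. if P xs then 1 else 0)" and q: "rf k (\<lambda>xs. if Q xs then 1 else 0)"
  have "rf k (\<lambda>xs. (if P xs then 1 else 0) * (if Q xs then 1 else 0))"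
    by (rule rf_mult[OF p q])
  then show ?thesis by (rule rf_cong) (simp split: if_split)
qed

lemma rf_or: "rf k (\<lambda>xs. if P xs then 1 else 0) \<Longrightarrow> rf k (\<lambda>xs. if Q xs then 1 else 0) \<Longrightarrow>
   rf k (\<lambda>xs. if P xs \<or> Q xs then 1 else 0)"
proof -
  assume p: "rf k (\<lambda>xs. if P xs then 1 else 0)" and q: "rf k (\<lambda>xs. if Q xs then 1 else 0)"
  have "rf k (\<lambda>xs. if P xs then 1 else (if Q xs then 1 else 0))"
    by (rule rf_if[OF p rf_const q])
  then show ?thesis by (rule rf_cong) (simp split: if_split)
qed

lemma rf_table:
  assumes "finite P" "rf k f" "rf k g"
  shows "rf k (\<lambda>xs. if (f xs, g xs) \<in> P then T (f xs) (g xs) else 0)"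
  using assms(1)
proof (induction P rule: finite_induct)
  case empty then show ?case using rf_const by simp
next
  case (insert p P)
  obtain a b where p: "p = (a, b)" by fastforce
  have "rf k (\<lambda>xs. if f xs = a \<and> g xs = b then T a b
          else if (f xs, g xs) \<in> P then T (f xs) (g xs) else 0)"
    by (rule rf_if[OF rf_and[OF rf_eq[OF assms(2) rf_const] rf_eq[OF assms(3) rf_const]] rf_const insert(3)])
  then show ?case by (rule rf_cong) (auto simp: p)
qed

lemma rf_tri: "rf k f \<Longrightarrow> rf k (\<lambda>xs. triangle (f xs))"
proof -
  assume a: "rf k f"
  let ?F0 = "\<lambda>ys::nat list. 0::nat" and ?G = "\<lambda>ys::nat list. ys ! 1 + Suc (ys ! 0)"
  have g: "rf (Suc (Suc 0)) ?G" by (rule rf_add[OF rf_proj rf_suc[OF rf_proj]]) simp_all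
  have "rf 1 (\<lambda>xs. pr ?F0 ?G (hd xs) (tl xs))"
    using rf_prim[of 0 ?F0 ?G] rf_const[of 0 0] g by simp
  moreover have e: "pr ?F0 ?G n [] = triangle n" for n by (induction n) auto
  ultimately have "rf 1 (\<lambda>xs. triangle (xs ! 0))" by (elim rf_cong) (auto dest!: len1)
  from rf_comp1[OF this a] show ?thesis by simp
qed

definition ITp :: "nat \<Rightarrow> nat \<Rightarrow> nat" where
  "ITp k n = pr (\<lambda>ys. 0) (\<lambda>ys. if ys ! 2 - triangle (ys ! 1) \<le> ys ! 1 then ys ! 1 else Suc (ys ! 1)) k [n]"

lemma rf_ITp: "rf 2 (\<lambda>xs. ITp (xs ! 0) (xs ! 1))"
proof -
  let ?F0 = "\<lambda>ys::nat list. 0::nat" and ?G = "\<lambda>ys::nat list. if ys ! 2 - triangle (ys ! 1) \<le> ys ! 1 then ys ! 1 else Suc (ys ! 1)"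
  have p1: "rf 3 (\<lambda>ys. ys ! 1)" and p2: "rf 3 (\<lambda>ys. ys ! 2)" by (rule rf_proj; simp)+
  have g: "rf 3 ?G"
    by (rule rf_if[OF rf_le[OF rf_sub[OF p2 rf_tri[OF p1]] p1] p1 rf_suc[OF p1]])
  have "rf 2 (\<lambda>xs. pr ?F0 ?G (hd xs) (tl xs))"
    using rf_prim[of 1 ?F0 ?G] rf_const[of 1 0] g by (simp add: numeral_2_eq_2 numeral_3_eq_3)
  then show ?thesis by (elim rf_cong) (auto dest!: len2 simp: ITp_def)
qed

lemma ITp_Suc: "ITp (Suc k) n = (if n - triangle (ITp k n) \<le> ITp k n then ITp k n else Suc (ITp k n))"
  by (simp add: ITp_def)

lemma ITp_inv: "triangle (ITp k n) \<le> n \<and> prod_decode n = prod_decode_aux (ITp k n) (n - triangle (ITp k n))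
   \<and> (n - triangle (ITp k n) \<le> ITp k n \<or> ITp k n = k)"
proof (induction k)
  case 0 then show ?case by (simp add: ITp_def prod_decode_def)
next
  case (Suc k)
  define j where "j = ITp k n"
  show ?case
  proof (cases "n - triangle j \<le> j")
    case True then show ?thesis using Suc by (simp add: ITp_Suc j_def[symmetric])
  next
    case False
    have "prod_decode_aux j (n - triangle j) = prod_decode_aux (Suc j) (n - triangle j - Suc j)"
      using False by (subst prod_decode_aux.simps) simp
    then show ?thesis using Suc False by (auto simp: ITp_Suc j_def[symmetric])
  qed
qed

lemma prod_decode_ITp: "prod_decode n = (n - triangle (ITp n n), ITp n n - (n - triangle (ITp n n)))"
proof -
  have h: "prod_decode n = prod_decode_aux (ITp n n) (n - triangle (ITp n n))"
    and c: "n - triangle (ITp n n) \<le> ITp n n \<or> ITp n n = n"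
    using ITp_inv[of n n] by auto
  have "n - triangle (ITp n n) \<le> ITp n n" using c by auto
  then show ?thesis using h by (subst (asm) prod_decode_aux.simps) simp
qed

lemma rf_fst_pd: "rf k f \<Longrightarrow> rf k (\<lambda>xs. fst (prod_decode (f xs)))"
proof -
  assume a: "rf k f"
  have i: "rf k (\<lambda>xs. ITp (f xs) (f xs))" using rf_comp2[OF rf_ITp a a] by simp
  have "rf k (\<lambda>xs. f xs - triangle (ITp (f xs) (f xs)))" by (rule rf_sub[OF a rf_tri[OF i]])
  then show ?thesis by (rule rf_cong) (subst prod_decode_ITp, simp)
qed

lemma rf_snd_pd: "rf k f \<Longrightarrow> rf k (\<lambda>xs. snd (prod_decode (f xs)))"
proof -
  assume a: "rf k f"
  have i: "rf k (\<lambda>xs. ITp (f xs) (f xs))" using rf_comp2[OF rf_ITp a a] by simp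
  have "rf k (\<lambda>xs. ITp (f xs) (f xs) - (f xs - triangle (ITp (f xs) (f xs))))"
    by (rule rf_sub[OF i rf_sub[OF a rf_tri[OF i]]])
  then show ?thesis by (rule rf_cong) (subst prod_decode_ITp, simp)
qed

definition headc :: "nat \<Rightarrow> nat" where "headc r = fst (prod_decode (r - 1))"
definition tailc :: "nat \<Rightarrow> nat" where "tailc r = snd (prod_decode (r - 1))"

lemma headc_cons: "headc (list_encode (y # ys)) = y" by (simp add: headc_def)
lemma tailc_cons: "tailc (list_encode (y # ys)) = list_encode ys" by (simp add: tailc_def)
lemma tailc_0: "tailc 0 = 0" by (simp add: tailc_def prod_decode_def prod_decode_aux.simps)

lemma rf_headc: "rf k f \<Longrightarrow> rf k (\<lambda>xs. headc (f xs))"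
  unfolding headc_def by (rule rf_fst_pd[OF rf_sub[OF _ rf_const]])
lemma rf_tailc: "rf k f \<Longrightarrow> rf k (\<lambda>xs. tailc (f xs))"
  unfolding tailc_def by (rule rf_snd_pd[OF rf_sub[OF _ rf_const]])

definition Rest :: "nat \<Rightarrow> nat \<Rightarrow> nat" where
  "Rest k n = pr (\<lambda>ys. ys ! 0) (\<lambda>ys. tailc (ys ! 1)) k [n]"

lemma rf_Rest: "rf 2 (\<lambda>xs. Rest (xs ! 0) (xs ! 1))"
proof -
  let ?F0 = "\<lambda>ys::nat list. ys ! 0" and ?G = "\<lambda>ys::nat list. tailc (ys ! 1)"
  have g: "rf 3 ?G" by (rule rf_tailc[OF rf_proj]) simp
  have "rf 2 (\<lambda>xs. pr ?F0 ?G (hd xs) (tl xs))"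
    using rf_prim[of 1 ?F0 ?G] rf_proj[of 0 1] g by (simp add: numeral_2_eq_2 numeral_3_eq_3)
  then show ?thesis by (elim rf_cong) (auto dest!: len2 simp: Rest_def)
qed

lemma Rest_drop: "Rest k (list_encode ws) = list_encode (drop k ws)"
proof (induction k)
  case 0 then show ?case by (simp add: Rest_def)
next
  case (Suc k)
  have "Rest (Suc k) (list_encode ws) = tailc (Rest k (list_encode ws))" by (simp add: Rest_def)
  also have "\<dots> = list_encode (drop (Suc k) ws)"
  proof (cases "drop k ws")
    case Nil then show ?thesis using Suc by (simp add: tailc_0 drop_Suc tl_drop[symmetric])
  next
    case (Cons y ys) then show ?thesis using Suc by (simp add: tailc_def drop_Suc tl_drop[symmetric])
  qed
  finally show ?case .
qed

lemma length_le_list_encode: "length ws \<le> list_encode ws"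
proof (induction ws)
  case Nil then show ?case by simp
next
  case (Cons x ws)
  then show ?case using le_prod_encode_2[of "list_encode ws" x] by simp
qed

lemma rf_dfa:
  assumes "finite P"
  shows "rf 1 (\<lambda>xs. foldl (\<lambda>q x. if (q, x) \<in> P then T q x else 0) q0 (list_decode (xs ! 0)))"
proof -
  define T' where "T' = (\<lambda>q x. if (q, x) \<in> P then T q x else 0)"
  define Qf where "Qf k n = pr (\<lambda>ys. q0)
      (\<lambda>ys. if Rest (ys ! 0) (ys ! 2) = 0 then ys ! 1 else T' (ys ! 1) (headc (Rest (ys ! 0) (ys ! 2)))) k [n]"
    for k n
  let ?F0 = "\<lambda>ys::nat list. q0" and ?G = "\<lambda>ys. if Rest (ys ! 0) (ys ! 2) = 0 then ys ! 1 else T' (ys ! 1) (headc (Rest (ys ! 0) (ys ! 2)))"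
  have p0: "rf 3 (\<lambda>ys. ys ! 0)" and p1: "rf 3 (\<lambda>ys. ys ! 1)" and p2: "rf 3 (\<lambda>ys. ys ! 2)" by (rule rf_proj; simp)+
  have r: "rf 3 (\<lambda>ys. Rest (ys ! 0) (ys ! 2))" using rf_comp2[OF rf_Rest p0 p2] by simp
  have t: "rf 3 (\<lambda>ys. T' (ys ! 1) (headc (Rest (ys ! 0) (ys ! 2))))"
    unfolding T'_def by (rule rf_table[OF assms p1 rf_headc[OF r]])
  have g: "rf 3 ?G" by (rule rf_if[OF rf_eq[OF r rf_const] p1 t])
  have "rf 2 (\<lambda>xs. pr ?F0 ?G (hd xs) (tl xs))"
    using rf_prim[of 1 ?F0 ?G] rf_const[of 1 q0] g by (simp add: numeral_2_eq_2 numeral_3_eq_3)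
  then have q: "rf 2 (\<lambda>xs. Qf (xs ! 0) (xs ! 1))" by (elim rf_cong) (auto dest!: len2 simp: Qf_def)
  have qd: "Qf k (list_encode ws) = foldl T' q0 (take k ws)" for k ws
  proof (induction k)
    case 0 then show ?case by (simp add: Qf_def)
  next
    case (Suc k)
    have "Qf (Suc k) (list_encode ws) = (if Rest k (list_encode ws) = 0 then Qf k (list_encode ws)
        else T' (Qf k (list_encode ws)) (headc (Rest k (list_encode ws))))"
      by (simp add: Qf_def)
    also have "\<dots> = foldl T' q0 (take (Suc k) ws)"
    proof (cases "drop k ws")
      case Nil
      then have "take (Suc k) ws = take k ws" by simp
      then show ?thesis using Suc Nil by (simp add: Rest_drop)
    next
      case (Cons y ys)
      have k: "k < length ws" using Cons by (cases "k < length ws") auto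
      have "ws ! k = y" using hd_drop_conv_nth[OF k] Cons by simp
      note k this
      then have "take (Suc k) ws = take k ws @ [y]" by (simp add: take_Suc_conv_app_nth)
      then show ?thesis using Suc Cons by (simp add: Rest_drop headc_def)
    qed
    finally show ?case .
  qed
  have "rf 1 (\<lambda>xs. Qf (xs ! 0) (xs ! 0))" using rf_comp2[OF q rf_proj rf_proj, of 0 1] by simp
  moreover have "Qf n n = foldl T' q0 (list_decode n)" for n
    using qd[of n "list_decode n"] length_le_list_encode[of "list_decode n"] by simp
  ultimately show ?thesis unfolding T'_def by (elim rf_cong) simp
qed

lemma decidable_rf: "decidable_nat_set D \<longleftrightarrow> rf 1 (\<lambda>xs. if xs ! 0 \<in> D then 1 else 0)"
  unfolding decidable_nat_set_def rf_def comp_by_def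
  by (metis len1[unfolded One_nat_def[symmetric]] One_nat_def length_Cons list.size(3) nth_Cons_0)

definition stepB :: "('a \<times> 'a \<times> 'g) set \<Rightarrow> 'a set \<Rightarrow> 'g \<Rightarrow> 'a set" where
  "stepB B S c = {b. \<exists>a\<in>S. (a, b, c) \<in> B}"

primrec reach :: "('a \<times> 'a \<times> 'g) set \<Rightarrow> 'a set \<Rightarrow> 'g list \<Rightarrow> 'a set" where
  "reach B S [] = S"
| "reach B S (c # w) = reach B (stepB B S c) w"

definition Lgraph :: "'g set \<Rightarrow> 'a set \<Rightarrow> ('a \<times> 'a \<times> 'g) set \<Rightarrow> 'g list set" where
  "Lgraph Al A B = {w \<in> lists Al. reach B A w = {}}"

lemma path_reach:
  "\<zeta> 0 \<in> S \<Longrightarrow> (\<forall>k<length w. (\<zeta> k, \<zeta> (Suc k), w ! k) \<in> B) \<Longrightarrow> \<zeta> (length w) \<in> reach B S w"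
proof (induction w arbitrary: S \<zeta>)
  case Nil then show ?case by simp
next
  case (Cons c w)
  have "\<zeta> 1 \<in> stepB B S c" using Cons.prems by (force simp: stepB_def)
  then have "(\<lambda>k. \<zeta> (Suc k)) (length w) \<in> reach B (stepB B S c) w"
    using Cons.prems by (intro Cons.IH) auto
  then show ?case by simp
qed

lemma reach_path:
  "b \<in> reach B S w \<Longrightarrow> \<exists>\<zeta>. \<zeta> 0 \<in> S \<and> \<zeta> (length w) = b \<and> (\<forall>k<length w. (\<zeta> k, \<zeta> (Suc k), w ! k) \<in> B)"
proof (induction w arbitrary: S)
  case Nil then show ?case by (intro exI[of _ "\<lambda>_. b"]) simp
next
  case (Cons c w)
  then obtain \<zeta> where z: "\<zeta> 0 \<in> stepB B S c" "\<zeta> (length w) = b" "\<forall>k<length w. (\<zeta> k, \<zeta> (Suc k), w ! k) \<in> B"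
    by auto
  then obtain a where a: "a \<in> S" "(a, \<zeta> 0, c) \<in> B" by (auto simp: stepB_def)
  define \<eta> where "\<eta> k = (case k of 0 \<Rightarrow> a | Suc j \<Rightarrow> \<zeta> j)" for k
  have "\<forall>k<length (c # w). (\<eta> k, \<eta> (Suc k), (c # w) ! k) \<in> B"
  proof (intro allI impI)
    fix k assume "k < length (c # w)"
    then show "(\<eta> k, \<eta> (Suc k), (c # w) ! k) \<in> B"
      using a z by (cases k) (auto simp: \<eta>_def)
  qed
  then show ?case using a z by (intro exI[of _ \<eta>]) (auto simp: \<eta>_def)
qed

lemma pigeon:
  assumes "finite A" "\<forall>n. \<exists>a\<in>A. P a (n::nat)" "\<forall>a n m. m \<le> n \<longrightarrow> P a n \<longrightarrow> P a m"
  shows "\<exists>a\<in>A. \<forall>n. P a n"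
proof (rule ccontr)
  assume "\<not> ?thesis"
  then have "\<forall>a\<in>A. \<exists>n. \<not> P a n" by auto
  then obtain N where N: "\<forall>a\<in>A. \<not> P a (N a)" by metis
  obtain a where a: "a \<in> A" "P a (Max (N ` A))" using assms(2) by blast
  have "N a \<le> Max (N ` A)" using a assms(1) by simp
  then show False using assms(3) a N by blast
qed

lemma chain_fw:
  assumes "\<forall>i a. Q i a \<longrightarrow> (\<exists>b. Q (i + 1) b \<and> R i a b)" "Q (0::int) a0"
  shows "\<exists>f::nat \<Rightarrow> 'a. f 0 = a0 \<and> (\<forall>k. Q (int k) (f k) \<and> R (int k) (f k) (f (Suc k)))"
proof -
  define f where "f = rec_nat a0 (\<lambda>k a. SOME b. Q (int k + 1) b \<and> R (int k) a b)"
  have f0: "f 0 = a0" and fS: "f (Suc k) = (SOME b. Q (int k + 1) b \<and> R (int k) (f k) b)" for k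
    by (simp_all add: f_def)
  have q: "Q (int k) (f k)" for k
  proof (induction k)
    case 0 then show ?case using assms(2) f0 by simp
  next
    case (Suc k)
    then have "Q (int k + 1) (f (Suc k)) \<and> R (int k) (f k) (f (Suc k))"
      unfolding fS by (rule someI_ex[OF assms(1)[rule_format]])
    then show ?case by (simp add: add.commute)
  qed
  have "R (int k) (f k) (f (Suc k))" for k
    using someI_ex[OF assms(1)[rule_format, OF q[of k]]] unfolding fS[symmetric] by simp
  then show ?thesis using f0 q by blast
qed

lemma chain_bw:
  assumes "\<forall>i a. Q i a \<longrightarrow> (\<exists>b. Q (i - 1) b \<and> R (i - 1) b a)" "Q (0::int) a0"
  shows "\<exists>g::nat \<Rightarrow> 'a. g 0 = a0 \<and> (\<forall>k. Q (- int k) (g k) \<and> R (- int k - 1) (g (Suc k)) (g k))"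
proof -
  have "\<forall>i a. Q (- i) a \<longrightarrow> (\<exists>b. Q (- (i + 1)) b \<and> R (- (i + 1)) b a)"
  proof (intro allI impI)
    fix i a assume "Q (- i) a"
    from assms(1)[rule_format, OF this] show "\<exists>b. Q (- (i + 1)) b \<and> R (- (i + 1)) b a" by simp
  qed
  note h = this
  have q0: "Q (- 0) a0" using assms(2) by simp
  obtain f where f: "f 0 = a0" "\<forall>k. Q (- int k) (f k) \<and> R (- (int k + 1)) (f (Suc k)) (f k)"
    using chain_fw[of "\<lambda>i. Q (- i)" "\<lambda>i a b. R (- (i + 1)) b a", OF h q0] by blast
  have "- (int k + 1) = - int k - 1" for k by simp
  then show ?thesis using f by (intro exI[of _ f]) simp
qed

definition good :: "('a \<times> 'a \<times> 'g) set \<Rightarrow> (int \<Rightarrow> 'g) \<Rightarrow> int \<Rightarrow> 'a \<Rightarrow> nat \<Rightarrow> bool" where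
  "good B x i a n \<longleftrightarrow> (\<exists>\<zeta>. \<zeta> i = a \<and> (\<forall>j. i - int n \<le> j \<and> j < i + int n \<longrightarrow> (\<zeta> j, \<zeta> (j + 1), x j) \<in> B))"

lemma good_mono: assumes "m \<le> n" "good B x i a n" shows "good B x i a m"
proof -
  obtain \<zeta> where z: "\<zeta> i = a" "\<forall>j. i - int n \<le> j \<and> j < i + int n \<longrightarrow> (\<zeta> j, \<zeta> (j + 1), x j) \<in> B"
    using assms(2) unfolding good_def by blast
  have mn: "int m \<le> int n" using assms(1) by simp
  have "\<forall>j. i - int m \<le> j \<and> j < i + int m \<longrightarrow> (\<zeta> j, \<zeta> (j + 1), x j) \<in> B"
  proof (intro allI impI)
    fix j assume "i - int m \<le> j \<and> j < i + int m"
    then have "i - int n \<le> j \<and> j < i + int n" using mn by linarith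
    then show "(\<zeta> j, \<zeta> (j + 1), x j) \<in> B" using z(2) by blast
  qed
  then show ?thesis using z(1) unfolding good_def by blast
qed

lemma factor_nth: "k < n \<Longrightarrow> factor x i n ! k = x (i + int k)"
  by (simp add: factor_def)

lemma length_factor[simp]: "length (factor x i n) = n"
  by (simp add: factor_def)

lemma Xgraph_forb:
  assumes A: "finite A" and BA: "B \<subseteq> A \<times> A \<times> Al" and x: "\<forall>i. x i \<in> Al"
  shows "x \<in> X_graph B \<longleftrightarrow> (\<forall>w\<in>Lgraph Al A B. \<not> occurs w x)"
proof
  assume "x \<in> X_graph B"
  then obtain \<zeta> where z: "\<forall>i. (\<zeta> i, \<zeta> (i + 1), x i) \<in> B" by (auto simp: X_graph_def)
  show "\<forall>w\<in>Lgraph Al A B. \<not> occurs w x"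
  proof (intro ballI notI)
    fix w assume w: "w \<in> Lgraph Al A B" and "occurs w x"
    then obtain i where wi: "factor x i (length w) = w" by (auto simp: occurs_def)
    let ?\<eta> = "\<lambda>k::nat. \<zeta> (i + int k)"
    have "(\<zeta> i, \<zeta> (i + 1), x i) \<in> B" using z by blast
    then have "?\<eta> 0 \<in> A" using BA by auto
    moreover have "\<forall>k<length w. (?\<eta> k, ?\<eta> (Suc k), w ! k) \<in> B"
    proof (intro allI impI)
      fix k assume k: "k < length w"
      have e: "(\<zeta> (i + int k), \<zeta> (i + int k + 1), x (i + int k)) \<in> B" using z by blast
      have "w ! k = x (i + int k)" using factor_nth[OF k, of x i] wi by simp
      moreover have "i + int (Suc k) = i + int k + 1" by simp
      ultimately show "(?\<eta> k, ?\<eta> (Suc k), w ! k) \<in> B" using e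
        by (simp add: add.assoc[symmetric] add.commute[of 1 "int k"])
    qed
    ultimately have "?\<eta> (length w) \<in> reach B A w" by (rule path_reach)
    then show False using w by (auto simp: Lgraph_def)
  qed
next
  assume H: "\<forall>w\<in>Lgraph Al A B. \<not> occurs w x"
  have ne: "reach B A (factor x i n) \<noteq> {}" for i n
  proof
    assume "reach B A (factor x i n) = {}"
    moreover have "factor x i n \<in> lists Al" using x by (auto simp: factor_def)
    ultimately have "factor x i n \<in> Lgraph Al A B" by (simp add: Lgraph_def)
    moreover have "occurs (factor x i n) x" by (auto simp: occurs_def)
    ultimately show False using H by blast
  qed
  have ex: "\<exists>a\<in>A. good B x i a (Suc n)" for i n
  proof -
    define N where "N = Suc n"
    obtain b where "b \<in> reach B A (factor x (i - int N) (2 * N))" using ne by blast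
    then obtain \<eta> where eta: "\<forall>k<2 * N. (\<eta> k, \<eta> (Suc k), factor x (i - int N) (2 * N) ! k) \<in> B"
      using reach_path by fastforce
    define \<zeta> where "\<zeta> j = \<eta> (nat (j - (i - int N)))" for j
    have zi: "\<zeta> i = \<eta> N" by (simp add: \<zeta>_def)
    have "N < 2 * N" by (simp add: N_def)
    from eta[rule_format, OF this] have "\<eta> N \<in> A" using BA by blast
    then have "\<zeta> i \<in> A" using zi by simp
    moreover have "good B x i (\<zeta> i) N"
      unfolding good_def
    proof (intro exI[of _ \<zeta>] conjI allI impI refl)
      fix j assume j: "i - int N \<le> j \<and> j < i + int N"
      define k where "k = nat (j - (i - int N))"
      have k: "k < 2 * N" "int k = j - (i - int N)" using j by (auto simp: k_def)
      have "nat (j + 1 - (i - int N)) = Suc k" using j unfolding k_def by (simp add: nat_add_distrib[symmetric] Suc_nat_eq_nat_zadd1 algebra_simps)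
      then show "(\<zeta> j, \<zeta> (j + 1), x j) \<in> B"
        using eta[rule_format, OF k(1)] factor_nth[OF k(1), of x "i - int N"] k(2) by (simp add: \<zeta>_def k_def[symmetric])
    qed
    ultimately show ?thesis unfolding N_def by blast
  qed
  define V where "V i a \<longleftrightarrow> a \<in> A \<and> (\<forall>n. good B x i a n)" for i a
  have V0: "\<exists>a. V i a" for i
  proof -
    have "\<exists>a\<in>A. \<forall>n. good B x i a (Suc n)"
    proof (rule pigeon[OF A])
      show "\<forall>n. \<exists>a\<in>A. good B x i a (Suc n)" using ex by blast
      show "\<forall>a n m. m \<le> n \<longrightarrow> good B x i a (Suc n) \<longrightarrow> good B x i a (Suc m)"
        by (intro allI impI) (rule good_mono[of "Suc _" "Suc _"], simp_all)
    qed
    then obtain a where a: "a \<in> A" "\<forall>n. good B x i a (Suc n)" by blast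
    have "good B x i a n" for n by (rule good_mono[of n "Suc n"]) (simp_all add: a(2))
    then show ?thesis unfolding V_def using a(1) by blast
  qed
  have Vf: "\<exists>b. V (i + 1) b \<and> (a, b, x i) \<in> B" if "V i a" for i a
  proof -
    have "\<exists>b\<in>{b\<in>A. (a, b, x i) \<in> B}. \<forall>n. good B x (i + 1) b n"
    proof (rule pigeon)
      show "\<forall>n. \<exists>b\<in>{b\<in>A. (a, b, x i) \<in> B}. good B x (i + 1) b n"
      proof
        fix n
        have "good B x i a (Suc n)" using that unfolding V_def by blast
        then obtain \<zeta> where z: "\<zeta> i = a" "\<forall>j. i - int (Suc n) \<le> j \<and> j < i + int (Suc n) \<longrightarrow> (\<zeta> j, \<zeta> (j + 1), x j) \<in> B"
          by (auto simp: good_def)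
        have e: "(a, \<zeta> (i + 1), x i) \<in> B" using z(2)[rule_format, of i] z(1) by simp
        have "\<forall>j. i + 1 - int n \<le> j \<and> j < i + 1 + int n \<longrightarrow> (\<zeta> j, \<zeta> (j + 1), x j) \<in> B"
        proof (intro allI impI)
          fix j assume "i + 1 - int n \<le> j \<and> j < i + 1 + int n"
          then have "i - int (Suc n) \<le> j \<and> j < i + int (Suc n)" by simp
          then show "(\<zeta> j, \<zeta> (j + 1), x j) \<in> B" using z(2) by blast
        qed
        then have "good B x (i + 1) (\<zeta> (i + 1)) n" unfolding good_def by blast
        then show "\<exists>b\<in>{b\<in>A. (a, b, x i) \<in> B}. good B x (i + 1) b n" using e BA by blast
      qed
    qed (use A in simp, intro allI impI, erule good_mono, assumption)
    then show ?thesis unfolding V_def by blast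
  qed
  have Vb: "\<exists>b. V (i - 1) b \<and> (b, a, x (i - 1)) \<in> B" if "V i a" for i a
  proof -
    have "\<exists>b\<in>{b\<in>A. (b, a, x (i - 1)) \<in> B}. \<forall>n. good B x (i - 1) b n"
    proof (rule pigeon)
      show "\<forall>n. \<exists>b\<in>{b\<in>A. (b, a, x (i - 1)) \<in> B}. good B x (i - 1) b n"
      proof
        fix n
        have "good B x i a (Suc n)" using that unfolding V_def by blast
        then obtain \<zeta> where z: "\<zeta> i = a" "\<forall>j. i - int (Suc n) \<le> j \<and> j < i + int (Suc n) \<longrightarrow> (\<zeta> j, \<zeta> (j + 1), x j) \<in> B"
          by (auto simp: good_def)
        have e: "(\<zeta> (i - 1), a, x (i - 1)) \<in> B" using z(2)[rule_format, of "i - 1"] z(1) by simp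
        have "\<forall>j. i - 1 - int n \<le> j \<and> j < i - 1 + int n \<longrightarrow> (\<zeta> j, \<zeta> (j + 1), x j) \<in> B"
        proof (intro allI impI)
          fix j assume "i - 1 - int n \<le> j \<and> j < i - 1 + int n"
          then have "i - int (Suc n) \<le> j \<and> j < i + int (Suc n)" by simp
          then show "(\<zeta> j, \<zeta> (j + 1), x j) \<in> B" using z(2) by blast
        qed
        then have "good B x (i - 1) (\<zeta> (i - 1)) n" unfolding good_def by blast
        then show "\<exists>b\<in>{b\<in>A. (b, a, x (i - 1)) \<in> B}. good B x (i - 1) b n" using e BA by blast
      qed
    qed (use A in simp, intro allI impI, erule good_mono, assumption)
    then show ?thesis unfolding V_def by blast
  qed
  obtain a0 where a0: "V 0 a0" using V0 by blast
  obtain f where f: "f 0 = a0" "\<forall>k. V (int k) (f k) \<and> (f k, f (Suc k), x (int k)) \<in> B"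
    using chain_fw[of V "\<lambda>i a b. (a, b, x i) \<in> B", OF _ a0] Vf by blast
  obtain g where g: "g 0 = a0" "\<forall>k. V (- int k) (g k) \<and> (g (Suc k), g k, x (- int k - 1)) \<in> B"
    using chain_bw[of V "\<lambda>i b a. (b, a, x i) \<in> B", OF _ a0] Vb by blast
  define \<zeta> where "\<zeta> i = (if 0 \<le> i then f (nat i) else g (nat (- i)))" for i
  have "(\<zeta> i, \<zeta> (i + 1), x i) \<in> B" for i
  proof (cases "0 \<le> i")
    case True
    then have "nat (i + 1) = Suc (nat i)" by simp
    then show ?thesis using True f(2)[rule_format, of "nat i"] by (simp add: \<zeta>_def)
  next
    case False
    define m where "m = nat (- (i + 1))"
    have m: "nat (- i) = Suc m" "- int m - 1 = i" using False by (auto simp: m_def)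
    have "\<zeta> (i + 1) = g m" using False f(1) g(1) by (auto simp: \<zeta>_def m_def)
    then show ?thesis using False g(2)[rule_format, of m] m by (simp add: \<zeta>_def)
  qed
  then show "x \<in> X_graph B" unfolding X_graph_def by blast
qed

lemma alph_carrier: "group G \<Longrightarrow> S \<subseteq> carrier G \<Longrightarrow> alph G S \<subseteq> carrier G"
  unfolding alph_def using group.inv_closed by fastforce

lemma word_val_closed: "group G \<Longrightarrow> set w \<subseteq> carrier G \<Longrightarrow> word_val G w \<in> carrier G"
  by (induction w) (auto simp: word_val_def group.is_monoid monoid.m_closed)

lemma word_val_append:
  assumes "group G" "set u \<subseteq> carrier G" "set v \<subseteq> carrier G"
  shows "word_val G (u @ v) = word_val G u \<otimes>\<^bsub>G\<^esub> word_val G v"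
  using assms(2)
proof (induction u)
  case Nil
  then show ?case using word_val_closed[OF assms(1,3)] assms(1)
    by (simp add: word_val_def group.is_monoid monoid.l_one)
next
  case (Cons a u)
  have "word_val G ((a # u) @ v) = a \<otimes>\<^bsub>G\<^esub> word_val G (u @ v)" by (simp add: word_val_def)
  also have "\<dots> = a \<otimes>\<^bsub>G\<^esub> (word_val G u \<otimes>\<^bsub>G\<^esub> word_val G v)" using Cons by simp
  also have "\<dots> = (a \<otimes>\<^bsub>G\<^esub> word_val G u) \<otimes>\<^bsub>G\<^esub> word_val G v"
    using Cons.prems word_val_closed[OF assms(1)] assms
    by (simp add: group.is_monoid monoid.m_assoc)
  finally show ?case by (simp add: word_val_def)
qed

lemma factor_snoc: "factor x i (Suc n) = factor x i n @ [x (i + int n)]"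
  by (simp add: factor_def)

lemma factor_cons: "factor x i (Suc n) = x i # factor x (i + 1) n"
  unfolding factor_def by (simp add: map_upt_Suc algebra_simps del: upt_Suc)

lemma part1:
  fixes G (structure)
  assumes G: "group G" and S: "S \<subseteq> carrier G" and x: "x \<in> skeleton G S" and z: "\<forall>i. (\<zeta> i, \<zeta> (i + 1), x i) \<in> B"
  shows "\<exists>\<omega>. snake G S B \<omega> \<zeta> \<and> dw G \<omega> = x"
proof -
  interpret group G by (rule G)
  have xa: "x i \<in> alph G S" for i using x by (simp add: skeleton_def)
  have xc: "x i \<in> carrier G" for i using xa alph_carrier[OF G S] by blast
  have fc: "set (factor x i n) \<subseteq> carrier G" for i n using xc by (auto simp: factor_def)
  have wc: "word_val G (factor x i n) \<in> carrier G" for i n by (rule word_val_closed[OF G fc])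
  define \<omega> where "\<omega> i = (if 0 \<le> i then word_val G (factor x 0 (nat i))
                          else inv (word_val G (factor x i (nat (- i)))))" for i
  have \<omega>c: "\<omega> i \<in> carrier G" for i using wc by (simp add: \<omega>_def)
  have neg: "\<omega> i = inv (word_val G (factor x i (nat (- i))))" if "i \<le> 0" for i
  proof (cases "i = 0")
    case True then show ?thesis by (simp add: \<omega>_def factor_def word_val_def)
  next
    case False then show ?thesis using that by (simp add: \<omega>_def)
  qed
  have stp: "\<omega> (i + 1) = \<omega> i \<otimes> x i" for i
  proof (cases "0 \<le> i")
    case True
    then have "nat (i + 1) = Suc (nat i)" by simp
    then have "factor x 0 (nat (i + 1)) = factor x 0 (nat i) @ [x i]"
      using True by (simp add: factor_snoc)
    then show ?thesis using True word_val_append[OF G fc[of 0 "nat i"], of "[x i]"] xc[of i]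
      by (simp add: \<omega>_def word_val_def)
  next
    case False
    define m where "m = nat (- (i + 1))"
    have m: "nat (- i) = Suc m" using False by (simp add: m_def)
    have W: "word_val G (factor x i (nat (- i))) = x i \<otimes> word_val G (factor x (i + 1) m)"
      by (simp add: m factor_cons word_val_def)
    have "\<omega> i = inv (x i \<otimes> word_val G (factor x (i + 1) m))" using neg[of i] False W by simp
    also have "\<dots> = inv (word_val G (factor x (i + 1) m)) \<otimes> inv (x i)"
      using xc wc by (simp add: inv_mult_group)
    finally have "\<omega> i \<otimes> x i = inv (word_val G (factor x (i + 1) m)) \<otimes> inv (x i) \<otimes> x i" by simp
    also have "\<dots> = inv (word_val G (factor x (i + 1) m))"
      using xc wc by (simp add: m_assoc)
    also have "\<dots> = \<omega> (i + 1)" using neg[of "i + 1"] False by (simp add: m_def)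
    finally show ?thesis by simp
  qed
  have shift: "\<omega> (i + int n) = \<omega> i \<otimes> word_val G (factor x i n)" for i n
  proof (induction n)
    case 0 then show ?case using \<omega>c by (simp add: factor_def word_val_def)
  next
    case (Suc n)
    have "\<omega> (i + int (Suc n)) = \<omega> (i + int n) \<otimes> x (i + int n)" using stp[of "i + int n"]
      by (simp add: add.assoc add.commute[of 1 "int n"])
    also have "\<dots> = \<omega> i \<otimes> (word_val G (factor x i n) \<otimes> x (i + int n))"
      using Suc \<omega>c wc xc by (simp add: m_assoc)
    also have "word_val G (factor x i n) \<otimes> x (i + int n) = word_val G (factor x i (Suc n))"
      using word_val_append[OF G fc[of i n], of "[x (i + int n)]"] xc
      by (simp add: factor_snoc word_val_def)
    finally show ?case .
  qed
  have ninj: "\<omega> i \<noteq> \<omega> j" if "i < j" for i j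
  proof
    assume eq: "\<omega> i = \<omega> j"
    define n where "n = nat (j - i)"
    have n: "j = i + int n" "n > 0" using that by (auto simp: n_def)
    have "\<omega> i \<otimes> word_val G (factor x i n) = \<omega> i \<otimes> \<one>" using eq shift[of i n] n \<omega>c by simp
    then have "word_val G (factor x i n) = \<one>" using \<omega>c wc by simp
    then show False using x n by (auto simp: skeleton_def)
  qed
  have "inj \<omega>"
  proof (rule injI)
    fix i j assume "\<omega> i = \<omega> j"
    then show "i = j" using ninj[of i j] ninj[of j i] by (cases i j rule: linorder_cases) auto
  qed
  moreover have dw: "dw G \<omega> = x"
  proof
    fix i
    have "inv (\<omega> i) \<otimes> (\<omega> i \<otimes> x i) = x i" using \<omega>c xc by (simp add: m_assoc[symmetric])
    then show "dw G \<omega> i = x i" by (simp add: dw_def stp)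
  qed
  ultimately have "snake G S B \<omega> \<zeta>" using \<omega>c xa z by (simp add: snake_def)
  then show ?thesis using dw by blast
qed

lemma foldl_closed: "(\<forall>q\<in>Q. \<forall>a\<in>Al. \<delta> q a \<in> Q) \<Longrightarrow> q \<in> Q \<Longrightarrow> w \<in> lists Al \<Longrightarrow> foldl \<delta> q w \<in> Q"
  by (induction w arbitrary: q) auto

lemma regular_union:
  assumes "regular_lang Al L1" "regular_lang Al L2"
  shows "regular_lang Al (L1 \<union> L2)"
proof -
  obtain Q1 :: "nat set" and q1 \<delta>1 F1 where r1: "finite Q1" "q1 \<in> Q1" "F1 \<subseteq> Q1"
    "\<forall>q\<in>Q1. \<forall>a\<in>Al. \<delta>1 q a \<in> Q1" "L1 = {w \<in> lists Al. foldl \<delta>1 q1 w \<in> F1}"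
    using assms(1) unfolding regular_lang_def by blast
  obtain Q2 :: "nat set" and q2 \<delta>2 F2 where r2: "finite Q2" "q2 \<in> Q2" "F2 \<subseteq> Q2"
    "\<forall>q\<in>Q2. \<forall>a\<in>Al. \<delta>2 q a \<in> Q2" "L2 = {w \<in> lists Al. foldl \<delta>2 q2 w \<in> F2}"
    using assms(2) unfolding regular_lang_def by blast
  define \<delta> where "\<delta> q a = prod_encode (\<delta>1 (fst (prod_decode q)) a, \<delta>2 (snd (prod_decode q)) a)" for q a
  have fo: "foldl \<delta> (prod_encode (p, q)) w = prod_encode (foldl \<delta>1 p w, foldl \<delta>2 q w)" for p q w
    by (induction w arbitrary: p q) (simp_all add: \<delta>_def)
  define Q where "Q = prod_encode ` (Q1 \<times> Q2)"
  define Fin where "Fin = prod_encode ` (F1 \<times> Q2 \<union> Q1 \<times> F2)"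
  have "finite Q" using r1 r2 by (simp add: Q_def)
  moreover have "prod_encode (q1, q2) \<in> Q" using r1 r2 by (simp add: Q_def)
  moreover have "Fin \<subseteq> Q" using r1 r2 by (auto simp: Fin_def Q_def)
  moreover have "\<forall>q\<in>Q. \<forall>a\<in>Al. \<delta> q a \<in> Q" using r1 r2 by (auto simp: Q_def \<delta>_def)
  moreover have "L1 \<union> L2 = {w \<in> lists Al. foldl \<delta> (prod_encode (q1, q2)) w \<in> Fin}"
  proof -
    have "foldl \<delta> (prod_encode (q1, q2)) w \<in> Fin \<longleftrightarrow> foldl \<delta>1 q1 w \<in> F1 \<or> foldl \<delta>2 q2 w \<in> F2"
      if "w \<in> lists Al" for w
    proof -
      have c1: "foldl \<delta>1 q1 w \<in> Q1" by (rule foldl_closed[OF r1(4) r1(2) that])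
      have c2: "foldl \<delta>2 q2 w \<in> Q2" by (rule foldl_closed[OF r2(4) r2(2) that])
      have "prod_encode p \<in> prod_encode ` X \<longleftrightarrow> p \<in> X" for p X
        by (rule inj_image_mem_iff[OF inj_prod_encode])
      then show ?thesis unfolding fo Fin_def using c1 c2 r1(3) r2(3) by blast
    qed
    then show ?thesis using r1(5) r2(5) by blast
  qed
  moreover have "L1 \<union> L2 \<subseteq> lists Al" using r1(5) r2(5) by auto
  ultimately show ?thesis unfolding regular_lang_def by blast
qed

lemma stepB_sub: "B \<subseteq> A \<times> A \<times> Al \<Longrightarrow> stepB B S c \<subseteq> A"
  by (auto simp: stepB_def)

lemma reach_sub: "B \<subseteq> A \<times> A \<times> Al \<Longrightarrow> S \<subseteq> A \<Longrightarrow> reach B S w \<subseteq> A"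
  by (induction w arbitrary: S) (auto dest: stepB_sub)

lemma regular_Lgraph:
  assumes A: "finite A" and BA: "B \<subseteq> A \<times> A \<times> Al"
  shows "regular_lang Al (Lgraph Al A B)"
proof -
  obtain idx where idx: "bij_betw idx (Pow A) {0..<card (Pow A)}"
    using ex_bij_betw_finite_nat[of "Pow A"] A by auto
  define dec where "dec = inv_into (Pow A) idx"
  have dec: "S \<subseteq> A \<Longrightarrow> dec (idx S) = S" for S
    using idx unfolding dec_def by (simp add: bij_betw_def inv_into_f_f)
  have idx_in: "S \<subseteq> A \<Longrightarrow> idx S \<in> {0..<card (Pow A)}" for S
    using idx by (auto simp: bij_betw_def)
  have idx_eq: "S \<subseteq> A \<Longrightarrow> T \<subseteq> A \<Longrightarrow> idx S = idx T \<longleftrightarrow> S = T" for S T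
    using idx by (auto simp: bij_betw_def inj_on_def)
  define \<delta> where "\<delta> q a = idx (stepB B (dec q) a)" for q a
  have fo: "S \<subseteq> A \<Longrightarrow> foldl \<delta> (idx S) w = idx (reach B S w)" for S w
  proof (induction w arbitrary: S)
    case Nil then show ?case by simp
  next
    case (Cons c w)
    have "\<delta> (idx S) c = idx (stepB B S c)" using Cons.prems dec by (simp add: \<delta>_def)
    then show ?case using Cons.IH[OF stepB_sub[OF BA]] by simp
  qed
  have "finite {0..<card (Pow A)}" by simp
  moreover have "idx A \<in> {0..<card (Pow A)}" by (rule idx_in) simp
  moreover have "{idx {}} \<subseteq> {0..<card (Pow A)}" using idx_in[of "{}"] by simp
  moreover have "\<forall>q\<in>{0..<card (Pow A)}. \<forall>a\<in>Al. \<delta> q a \<in> {0..<card (Pow A)}"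
    using idx_in stepB_sub[OF BA] by (simp add: \<delta>_def)
  moreover have "Lgraph Al A B = {w \<in> lists Al. foldl \<delta> (idx A) w \<in> {idx {}}}"
    using fo[of A] idx_eq reach_sub[OF BA] by (auto simp: Lgraph_def)
  moreover have "Lgraph Al A B \<subseteq> lists Al" by (auto simp: Lgraph_def)
  ultimately show ?thesis unfolding regular_lang_def by blast
qed

lemma rf_Lgraph:
  assumes A: "finite A" and BA: "B \<subseteq> A \<times> A \<times> Al" and e: "bij_betw e Al {..<M}"
  shows "rf 1 (\<lambda>xs. if xs ! 0 \<in> list_encode ` map e ` Lgraph Al A B then 1 else 0)"
proof -
  obtain idx where idx: "bij_betw idx (Pow A) {0..<card (Pow A)}"
    using ex_bij_betw_finite_nat[of "Pow A"] A by auto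
  define NP where "NP = card (Pow A)"
  define dec where "dec = inv_into (Pow A) idx"
  have dec: "S \<subseteq> A \<Longrightarrow> dec (idx S) = S" for S
    using idx unfolding dec_def by (simp add: bij_betw_def inv_into_f_f)
  have idx_in: "S \<subseteq> A \<Longrightarrow> idx S < NP" for S
    using idx by (auto simp: bij_betw_def NP_def)
  have idx_eq: "S \<subseteq> A \<Longrightarrow> T \<subseteq> A \<Longrightarrow> idx S = idx T \<longleftrightarrow> S = T" for S T
    using idx by (auto simp: bij_betw_def inj_on_def)
  define einv where "einv = inv_into Al e"
  define P where "P = {1..NP} \<times> {..<M}"
  define T where "T q c = Suc (idx (stepB B (dec (q - 1)) (einv c)))" for q c
  define T' where "T' q c = (if (q, c) \<in> P then T q c else 0)" for q c
  have f0: "foldl T' 0 ws = 0" for ws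
    by (induction ws) (auto simp: T'_def P_def)
  have fo: "S \<subseteq> A \<Longrightarrow> foldl T' (Suc (idx S)) ws =
      (if set ws \<subseteq> {..<M} then Suc (idx (reach B S (map einv ws))) else 0)" for S ws
  proof (induction ws arbitrary: S)
    case Nil then show ?case by simp
  next
    case (Cons c ws)
    show ?case
    proof (cases "c < M")
      case True
      have "T' (Suc (idx S)) c = Suc (idx (stepB B S (einv c)))"
        using True idx_in[OF Cons.prems] dec[OF Cons.prems] by (simp add: T'_def P_def T_def)
      then show ?thesis using Cons.IH[OF stepB_sub[OF BA]] True by simp
    next
      case False
      then have "T' (Suc (idx S)) c = 0" by (simp add: T'_def P_def)
      then show ?thesis using False f0 by simp
    qed
  qed
  have mem: "n \<in> list_encode ` map e ` Lgraph Al A B \<longleftrightarrow> foldl T' (Suc (idx A)) (list_decode n) = Suc (idx {})" for n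
  proof -
    define ws where "ws = list_decode n"
    have n: "n = list_encode ws" by (simp add: ws_def)
    have "n \<in> list_encode ` map e ` Lgraph Al A B \<longleftrightarrow> ws \<in> map e ` Lgraph Al A B"
      unfolding n using inj_list_encode by (auto simp: inj_on_image_mem_iff)
    also have "\<dots> \<longleftrightarrow> set ws \<subseteq> {..<M} \<and> reach B A (map einv ws) = {}"
    proof
      assume "ws \<in> map e ` Lgraph Al A B"
      then obtain w where w: "w \<in> lists Al" "reach B A w = {}" "ws = map e w" by (auto simp: Lgraph_def)
      have "map einv ws = w" using w e unfolding einv_def
        by (auto simp: bij_betw_def inv_into_f_f map_idI intro!: map_idI)
      moreover have "set ws \<subseteq> {..<M}" using w e by (auto simp: bij_betw_def)
      ultimately show "set ws \<subseteq> {..<M} \<and> reach B A (map einv ws) = {}" using w by simp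
    next
      assume h: "set ws \<subseteq> {..<M} \<and> reach B A (map einv ws) = {}"
      have cin: "c \<in> e ` Al" if "c \<in> set ws" for c using h that e by (auto simp: bij_betw_def)
      have "map einv ws \<in> lists Al" using cin unfolding einv_def
        by (auto intro!: inv_into_into)
      moreover have "map e (map einv ws) = ws"
      proof -
        have "c \<in> e ` Al" if "c \<in> set ws" for c using h that e by (auto simp: bij_betw_def)
        then have "map (\<lambda>c. e (einv c)) ws = ws" unfolding einv_def by (intro map_idI) (simp add: f_inv_into_f)
        then show ?thesis by (simp add: comp_def)
      qed
      ultimately show "ws \<in> map e ` Lgraph Al A B" using h unfolding Lgraph_def
        by (metis (mono_tags, lifting) image_eqI mem_Collect_eq)
    qed
    also have "\<dots> \<longleftrightarrow> foldl T' (Suc (idx A)) ws = Suc (idx {})"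
      using fo[of A ws] idx_eq[of _ "{}"] reach_sub[OF BA, of A] by auto
    finally show ?thesis by (simp add: ws_def)
  qed
  have fin: "finite P" by (simp add: P_def)
  have Teq: "(\<lambda>q c. if (q, c) \<in> P then T q c else 0) = T'" by (intro ext) (simp add: T'_def)
  have r: "rf 1 (\<lambda>xs. if foldl T' (Suc (idx A)) (list_decode (xs ! 0)) = Suc (idx {}) then 1 else 0)"
    using rf_eq[OF rf_dfa[OF fin, of T "Suc (idx A)"] rf_const[of 1 "Suc (idx {})"]] unfolding Teq .
  show ?thesis by (rule rf_cong[OF r]) (simp only: mem)
qed

lemma X_forb_inter:
  assumes A: "finite A" and BA: "B \<subseteq> A \<times> A \<times> Al"
  shows "X_forb Al F \<inter> X_graph B = X_forb Al (F \<union> Lgraph Al A B)"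
  using Xgraph_forb[OF A BA] unfolding X_forb_def by blast

theorem proposition3:
  fixes G :: "('g, 'b) monoid_scheme" and S :: "'g set"
    and A :: "'a set" and B :: "('a \<times> 'a \<times> 'g) set" and Y :: "(int \<Rightarrow> 'g) set"
  assumes "group G" and "finite S" and "S \<subseteq> carrier G" and "generate G S = carrier G"
    and "tileset_graph G S A B"
    and "Y \<noteq> {}" and "skeletal G S Y"
  shows "(Y \<inter> X_graph B \<noteq> {} \<longleftrightarrow> (\<exists>\<omega> \<zeta>. snake G S B \<omega> \<zeta> \<and> dw G \<omega> \<in> Y))
    \<and> (effective_subshift (alph G S) Y \<longrightarrow> effective_subshift (alph G S) (Y \<inter> X_graph B))
    \<and> (sofic_subshift (alph G S) Y \<longrightarrow> sofic_subshift (alph G S) (Y \<inter> X_graph B))"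
proof (intro conjI impI)
  note G = assms(1) and Sc = assms(3)
  have A: "finite A" and BA: "B \<subseteq> A \<times> A \<times> alph G S"
    using assms(5) by (auto simp: tileset_graph_def)
  have Ysk: "Y \<subseteq> skeleton G S" using assms(7) by (simp add: skeletal_def)
  show "Y \<inter> X_graph B \<noteq> {} \<longleftrightarrow> (\<exists>\<omega> \<zeta>. snake G S B \<omega> \<zeta> \<and> dw G \<omega> \<in> Y)"
  proof
    assume "Y \<inter> X_graph B \<noteq> {}"
    then obtain x where x: "x \<in> Y" "x \<in> X_graph B" by blast
    then obtain \<zeta> where z: "\<forall>i. (\<zeta> i, \<zeta> (i + 1), x i) \<in> B" by (auto simp: X_graph_def)
    have "x \<in> skeleton G S" using x Ysk by blast
    from part1[OF G Sc this z] obtain \<omega> where "snake G S B \<omega> \<zeta>" "dw G \<omega> = x" by blast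
    then show "\<exists>\<omega> \<zeta>. snake G S B \<omega> \<zeta> \<and> dw G \<omega> \<in> Y" using x by blast
  next
    assume "\<exists>\<omega> \<zeta>. snake G S B \<omega> \<zeta> \<and> dw G \<omega> \<in> Y"
    then obtain \<omega> \<zeta> where s: "snake G S B \<omega> \<zeta>" "dw G \<omega> \<in> Y" by blast
    then have "dw G \<omega> \<in> X_graph B" unfolding X_graph_def snake_def by blast
    then show "Y \<inter> X_graph B \<noteq> {}" using s by blast
  qed
next
  assume "effective_subshift (alph G S) Y"
  then obtain F e where F: "F \<subseteq> lists (alph G S)" "bij_betw e (alph G S) {..<card (alph G S)}"
    "decidable_nat_set (list_encode ` map e ` F)" "Y = X_forb (alph G S) F"
    unfolding effective_subshift_def decidable_lang_def by blast
  have A: "finite A" and BA: "B \<subseteq> A \<times> A \<times> alph G S"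
    using assms(5) by (auto simp: tileset_graph_def)
  let ?L = "Lgraph (alph G S) A B"
  have "rf 1 (\<lambda>xs. if xs ! 0 \<in> list_encode ` map e ` F \<or> xs ! 0 \<in> list_encode ` map e ` ?L then 1 else 0)"
    using rf_or[OF F(3)[unfolded decidable_rf] rf_Lgraph[OF A BA F(2)]] .
  then have "decidable_nat_set (list_encode ` map e ` (F \<union> ?L))"
    unfolding decidable_rf image_Un Un_iff .
  moreover have "F \<union> ?L \<subseteq> lists (alph G S)" using F(1) by (auto simp: Lgraph_def)
  ultimately have "decidable_lang (alph G S) (F \<union> ?L)"
    unfolding decidable_lang_def using F(2) by blast
  moreover have "Y \<inter> X_graph B = X_forb (alph G S) (F \<union> ?L)"
    using X_forb_inter[OF A BA] F(4) by simp
  ultimately show "effective_subshift (alph G S) (Y \<inter> X_graph B)"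
    unfolding effective_subshift_def by blast
next
  assume "sofic_subshift (alph G S) Y"
  then obtain F where F: "regular_lang (alph G S) F" "Y = X_forb (alph G S) F"
    unfolding sofic_subshift_def by blast
  have A: "finite A" and BA: "B \<subseteq> A \<times> A \<times> alph G S"
    using assms(5) by (auto simp: tileset_graph_def)
  have "regular_lang (alph G S) (F \<union> Lgraph (alph G S) A B)"
    by (rule regular_union[OF F(1) regular_Lgraph[OF A BA]])
  moreover have "Y \<inter> X_graph B = X_forb (alph G S) (F \<union> Lgraph (alph G S) A B)"
    using X_forb_inter[OF A BA] F(2) by simp
  ultimately show "sofic_subshift (alph G S) (Y \<inter> X_graph B)"
    unfolding sofic_subshift_def by blast
qed

end
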